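(* Under the hypotheses and notation of the setting below, a vector $x=x_1\varepsilon_1+x_2\varepsilon_2$ with $x_1,x_2\neq0$ is $q$-minimal and $g$-anisotropic (i.e. $q(x)\in\mathcal T$) iff $\beta,x_1,x_2\in\mathcal T$ and $\alpha_1x_1^2<_\nu\beta x_1x_2$ and $\alpha_2x_2^2<_\nu\beta x_1x_2$.
   Context: All semirings are commutative with $1$. A semiring $R$ is supertropical if $e:=1+1$ satisfies $e+e=e$ and, for all $x,y\in R$: if $ex\neq ey$ then $x+y\in\{x,y\}$, and if $ex=ey$ then $x+y=ey$. $eR$ is totally ordered by $u\le v\iff u+v=v$; write $x<_\nu y$ for $ex<ey$. $\mathcal T=R\setminus eR$, $\mathcal G=eR\setminus\{0\}$. Setting: $R$ is supertropical with $e\mathcal T=\mathcal G$, $\mathcal T\cdot\mathcal T\subseteq\mathcal T$, $\mathcal G$ cancellative under multiplication; $V$ is free with base $\varepsilon_1,\varepsilon_2$; $q$ is a quadratic form on $V$ (a map with $q(ax)=a^2q(x)$ and some symmetric bilinear companion $b$ with $q(x+y)=q(x)+q(y)+b(x,y)$); $\alpha_i=q(\varepsilon_i)$, $\beta=b(\varepsilon_1,\varepsilon_2)$, so $q(x_1\varepsilon_1+x_2\varepsilon_2)=\alpha_1x_1^2+\beta x_1x_2+\alpha_2x_2^2$. The minimal ordering on $V$: $x\le y\iff\exists z:\ x+z=y$; $x<y$ means $x\le y$, $x\neq y$. $x$ is $q$-minimal if no $x'<x$ has $q(x')=q(x)$. *)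

theory Defs
  imports Main
begin

definition e_el :: "'a::comm_semiring_1" where
  "e_el = 1 + 1"

definition supertropical :: "'a::comm_semiring_1 itself \<Rightarrow> bool" where
  "supertropical _ \<longleftrightarrow> e_el + e_el = (e_el::'a) \<and>
     (\<forall>x y::'a. (e_el * x \<noteq> e_el * y \<longrightarrow> x + y \<in> {x, y}) \<and>
                (e_el * x = e_el * y \<longrightarrow> x + y = e_el * y))"

definition Tset :: "'a::comm_semiring_1 set" where
  "Tset = UNIV - range (\<lambda>x. e_el * x)"

definition Gset :: "'a::comm_semiring_1 set" where
  "Gset = range (\<lambda>x. e_el * x) - {0}"

text \<open>Order on eR: u \<le> v iff u + v = v; x <_nu y iff ex < ey.\<close>
definition nu_less :: "'a::comm_semiring_1 \<Rightarrow> 'a \<Rightarrow> bool" where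
  "nu_less x y \<longleftrightarrow> e_el * x + e_el * y = e_el * y \<and> e_el * x \<noteq> e_el * y"

definition standing_setting :: "'a::comm_semiring_1 itself \<Rightarrow> bool" where
  "standing_setting t \<longleftrightarrow> supertropical t \<and>
     (\<lambda>x. e_el * x) ` (Tset::'a set) = Gset \<and>
     (\<forall>s\<in>(Tset::'a set). \<forall>u\<in>Tset. s * u \<in> Tset) \<and>
     (\<forall>a\<in>(Gset::'a set). \<forall>b\<in>Gset. \<forall>c\<in>Gset. a * c = b * c \<longrightarrow> a = b)"

text \<open>The free module V with base eps1 = (1,0), eps2 = (0,1), as pairs.\<close>
definition vadd :: "'a::comm_semiring_1 \<times> 'a \<Rightarrow> 'a \<times> 'a \<Rightarrow> 'a \<times> 'a" where
  "vadd x y = (fst x + fst y, snd x + snd y)"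

definition vsmult :: "'a::comm_semiring_1 \<Rightarrow> 'a \<times> 'a \<Rightarrow> 'a \<times> 'a" where
  "vsmult a x = (a * fst x, a * snd x)"

definition is_quad_form :: "('a::comm_semiring_1 \<times> 'a \<Rightarrow> 'a) \<Rightarrow> ('a \<times> 'a \<Rightarrow> 'a \<times> 'a \<Rightarrow> 'a) \<Rightarrow> bool" where
  "is_quad_form q b \<longleftrightarrow>
     (\<forall>a x. q (vsmult a x) = a^2 * q x) \<and>
     (\<forall>x y. b x y = b y x) \<and>
     (\<forall>x y z. b (vadd x y) z = b x z + b y z) \<and>
     (\<forall>a x y. b (vsmult a x) y = a * b x y) \<and>
     (\<forall>x y. q (vadd x y) = q x + q y + b x y)"

definition vle :: "'a::comm_semiring_1 \<times> 'a \<Rightarrow> 'a \<times> 'a \<Rightarrow> bool" where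
  "vle x y \<longleftrightarrow> (\<exists>z. vadd x z = y)"

definition vless :: "'a::comm_semiring_1 \<times> 'a \<Rightarrow> 'a \<times> 'a \<Rightarrow> bool" where
  "vless x y \<longleftrightarrow> vle x y \<and> x \<noteq> y"

definition q_minimal :: "('a::comm_semiring_1 \<times> 'a \<Rightarrow> 'a) \<Rightarrow> 'a \<times> 'a \<Rightarrow> bool" where
  "q_minimal q x \<longleftrightarrow> \<not> (\<exists>x'. vless x' x \<and> q x' = q x)"

end

theory Submission
  imports Defs
begin

definition le :: "'a::comm_semiring_1 \<Rightarrow> 'a \<Rightarrow> bool" where
  "le x y \<longleftrightarrow> e_el * x + e_el * y = e_el * y"

context
  fixes t :: "'a::comm_semiring_1 itself"
  assumes ST: "supertropical t"
begin

lemma st_ee: "e_el + e_el = (e_el::'a)"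
  using ST unfolding supertropical_def by auto

lemma st_eq: "e_el * x = e_el * y \<Longrightarrow> x + y = e_el * (y::'a)"
  using ST unfolding supertropical_def by auto

lemma st_neq: "e_el * x \<noteq> e_el * y \<Longrightarrow> x + y = x \<or> x + (y::'a) = y"
  using ST unfolding supertropical_def by auto

lemma e_e: "e_el * e_el = (e_el::'a)"
proof -
  have "e_el * e_el = e_el * (1 + 1::'a)" by (simp only: e_el_def)
  also have "\<dots> = e_el + e_el" by (simp only: distrib_left mult_1_right)
  finally show ?thesis using st_ee by simp
qed

lemma e_idem: "e_el * (e_el * x) = e_el * (x::'a)"
  by (metis e_e mult.assoc)

lemma x_x: "x + x = e_el * (x::'a)"
  using st_eq by blast

lemma le_refl: "le x (x::'a)"
  unfolding le_def by (metis x_x e_idem)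

lemma le_total: "le x y \<or> le y (x::'a)"
proof -
  have "e_el*x + e_el*y = e_el*x \<or> e_el*x + e_el*y = e_el*y"
  proof (cases "e_el*(e_el*x) = e_el*(e_el*y)")
    case True then show ?thesis using st_eq[OF True] e_idem by simp
  next
    case False then show ?thesis using st_neq[OF False] by auto
  qed
  thus ?thesis unfolding le_def by (auto simp: add.commute)
qed

lemma le_antisym: "le x y \<Longrightarrow> le y x \<Longrightarrow> e_el * x = e_el * (y::'a)"
  unfolding le_def by (metis add.commute)

lemma le_trans: "le x y \<Longrightarrow> le y z \<Longrightarrow> le x (z::'a)"
  unfolding le_def by (metis add.assoc)

lemma le_mult: "le x y \<Longrightarrow> le (x * c) (y * (c::'a))"
  unfolding le_def by (metis distrib_right mult.assoc)

lemma le_mult_l: "le x y \<Longrightarrow> le (c * x) (c * (y::'a))"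
  using le_mult by (metis mult.commute)

lemma e_add: "e_el * (x + y) = e_el * x + e_el * (y::'a)"
  by (simp add: distrib_left)

lemma le_add: "le x (x + (y::'a))"
  unfolding le_def e_add
  by (metis add.assoc x_x e_idem)

lemma nu_less_iff: "nu_less x y \<longleftrightarrow> \<not> le y (x::'a)"
  unfolding nu_less_def
  by (metis le_def le_antisym le_refl le_total add.commute)

lemma nu_less_add: "nu_less x y \<Longrightarrow> x + y = (y::'a)"
  unfolding nu_less_def
  by (metis add.commute distrib_left st_neq)

lemma le_less_trans: "le x y \<Longrightarrow> nu_less y z \<Longrightarrow> nu_less x (z::'a)"
  using nu_less_iff le_trans by blast

lemma less_le_trans: "nu_less x y \<Longrightarrow> le y z \<Longrightarrow> nu_less x (z::'a)"
  using nu_less_iff le_trans by blast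

lemma le_add_both: "le x z \<Longrightarrow> le y z \<Longrightarrow> le (x + y) (z::'a)"
  unfolding le_def e_add by (metis add.assoc)

lemma less_add_both: "nu_less x z \<Longrightarrow> nu_less y z \<Longrightarrow> nu_less (x + y) (z::'a)"
proof -
  assume a: "nu_less x z" "nu_less y z"
  show ?thesis
  proof (cases "le x y")
    case True
    then have "x + y = y \<or> e_el*(x+y) = e_el*y"
      by (simp add: e_add le_def)
    then have "e_el*(x+y) = e_el*y" by auto
    then show ?thesis using a(2) unfolding nu_less_def by simp
  next
    case False
    then have "le y x" using le_total by blast
    then have "e_el*(x+y) = e_el*x" by (simp add: e_add le_def add.commute)
    then show ?thesis using a(1) unfolding nu_less_def by simp
  qed
qed

lemma eR_iff: "(x::'a) \<notin> Tset \<longleftrightarrow> x = e_el * x"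
  unfolding Tset_def using e_idem by auto

lemma sum_T: "x + y \<in> Tset \<Longrightarrow> (x + y = x \<and> nu_less y x) \<or> (x + y = (y::'a) \<and> nu_less x y)"
proof -
  assume T: "x + y \<in> Tset"
  have ne: "e_el * x \<noteq> e_el * y"
  proof
    assume "e_el * x = e_el * y"
    then have "x + y = e_el * y" by (rule st_eq)
    then show False using T unfolding Tset_def by auto
  qed
  show ?thesis
  proof (cases "x + y = x")
    case True
    then have "le y x" unfolding le_def using e_add by (metis add.commute)
    then show ?thesis using True ne unfolding nu_less_def le_def by auto
  next
    case False
    then have "x + y = y" using st_neq[OF ne] by auto
    then have "le x y" unfolding le_def using e_add by metis
    then show ?thesis using \<open>x+y=y\<close> ne unfolding nu_less_def le_def by auto
  qed
qed

lemma le_of_sum: "x = y + (z::'a) \<Longrightarrow> le y x"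
  using le_add by simp

end


context
  fixes t :: "'a::comm_semiring_1 itself"
  assumes SS: "standing_setting t"
begin

lemma SS_st: "supertropical t" using SS unfolding standing_setting_def by auto

lemma eT_G: "(c::'a) \<in> Tset \<Longrightarrow> e_el * c \<noteq> 0"
  using SS unfolding standing_setting_def Gset_def by blast

lemma TT: "(a::'a) \<in> Tset \<Longrightarrow> b \<in> Tset \<Longrightarrow> a * b \<in> Tset"
  using SS unfolding standing_setting_def by blast

lemma canc: "(a::'a) \<in> Gset \<Longrightarrow> b \<in> Gset \<Longrightarrow> c \<in> Gset \<Longrightarrow> a * c = b * c \<Longrightarrow> a = b"
  using SS unfolding standing_setting_def by blast

lemma G_T: "(g::'a) \<in> Gset \<Longrightarrow> \<exists>s\<in>Tset. g = e_el * s"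
  using SS unfolding standing_setting_def by (metis imageE)

lemma e0: "e_el * (a::'a) = 0 \<Longrightarrow> a = 0"
  using eT_G eR_iff[OF SS_st] by metis

lemma inG: "(a::'a) \<noteq> 0 \<Longrightarrow> e_el * a \<in> Gset"
  unfolding Gset_def using e0 by auto

lemma strict_mult: "nu_less x y \<Longrightarrow> (c::'a) \<in> Tset \<Longrightarrow> nu_less (x * c) (y * c)"
proof -
  assume xy: "nu_less x y" and c: "c \<in> Tset"
  have le: "le (x*c) (y*c)" using xy le_mult[OF SS_st] unfolding nu_less_def le_def by blast
  have y0: "y \<noteq> 0" using xy unfolding nu_less_def by auto
  obtain s where s: "s \<in> Tset" "e_el * y = e_el * s" using G_T[OF inG[OF y0]] by blast
  have "e_el * (y * c) = e_el * (s * c)" using s by (metis mult.assoc)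
  then have yc: "e_el * (y * c) \<noteq> 0" using eT_G TT s c by metis
  show ?thesis
  proof (rule ccontr)
    assume "\<not> nu_less (x * c) (y * c)"
    then have eq: "e_el * (x*c) = e_el * (y*c)" using le unfolding nu_less_def le_def by blast
    then have x0: "x \<noteq> 0" using yc by auto
    have c0: "c \<noteq> 0" using c unfolding Tset_def by (metis DiffD2 mult_zero_right rangeI)
    have "(e_el * x) * (e_el * c) = (e_el * y) * (e_el * c)"
      using eq e_e[OF SS_st] by (metis mult.assoc mult.commute)
    then have "e_el * x = e_el * y" using canc inG x0 y0 c0 by blast
    then show False using xy unfolding nu_less_def by auto
  qed
qed

lemma ghost_mult: "(a::'a) \<notin> Tset \<Longrightarrow> a * b \<notin> Tset"
  using eR_iff[OF SS_st] e_idem[OF SS_st] by (metis mult.assoc)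

end

lemma q_formula:
  assumes Q: "is_quad_form q b"
  shows "q (y1, y2) = q (1,0) * y1^2 + b (1,0) (0,1) * y1 * y2 + q (0,1) * (y2::'a::comm_semiring_1)^2"
proof -
  have v: "(y1, y2) = vadd (vsmult y1 (1,0)) (vsmult y2 (0,1))" by (simp add: vadd_def vsmult_def)
  have "b (vsmult y1 (1,0)) (vsmult y2 (0,1)) = y1 * b (1,0) (vsmult y2 (0,1))"
    using Q unfolding is_quad_form_def by blast
  also have "b (1,0) (vsmult y2 (0,1)) = b (vsmult y2 (0,1)) (1,0)"
    using Q unfolding is_quad_form_def by blast
  also have "\<dots> = y2 * b (0,1) (1,0)" using Q unfolding is_quad_form_def by blast
  also have "b (0,1) (1,0) = b (1,0) (0,1)" using Q unfolding is_quad_form_def by blast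
  finally have bb: "b (vsmult y1 (1,0)) (vsmult y2 (0,1)) = b (1,0) (0,1) * y1 * y2"
    by (simp add: ac_simps)
  have "q (y1, y2) = q (vsmult y1 (1,0)) + q (vsmult y2 (0,1)) + b (vsmult y1 (1,0)) (vsmult y2 (0,1))"
    using Q v unfolding is_quad_form_def by metis
  also have "\<dots> = y1^2 * q (1,0) + y2^2 * q (0,1) + b (1,0) (0,1) * y1 * y2"
    using Q bb unfolding is_quad_form_def by simp
  finally show ?thesis by (simp add: ac_simps)
qed


lemma sq_le:
  assumes ST: "supertropical TYPE('a::comm_semiring_1)" and l: "le y (x::'a)"
  shows "le (y^2) (x^2)"
proof -
  have "le (y*y) (x*y)" using le_mult[OF ST l] .
  moreover have "le (x*y) (x*x)" using le_mult_l[OF ST l] .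
  ultimately show ?thesis using le_trans[OF ST] by (simp add: power2_eq_square)
qed

theorem corollary6p8:
  fixes q :: "'a::comm_semiring_1 \<times> 'a \<Rightarrow> 'a"
    and b :: "'a \<times> 'a \<Rightarrow> 'a \<times> 'a \<Rightarrow> 'a"
    and x1 x2 :: 'a
  assumes "standing_setting TYPE('a)"
    and "is_quad_form q b"
    and "x1 \<noteq> 0" and "x2 \<noteq> 0"
  shows "(q_minimal q (x1, x2) \<and> q (x1, x2) \<in> Tset) \<longleftrightarrow>
         (b (1, 0) (0, 1) \<in> Tset \<and> x1 \<in> Tset \<and> x2 \<in> Tset \<and>
          nu_less (q (1, 0) * x1^2) (b (1, 0) (0, 1) * x1 * x2) \<and>
          nu_less (q (0, 1) * x2^2) (b (1, 0) (0, 1) * x1 * x2))"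
proof -
  note SS = assms(1)
  note ST = SS_st[OF SS]
  define A1 where "A1 = q (1,0)"
  define A2 where "A2 = q (0,1)"
  define B where "B = b (1,0) (0,1)"
  have qf: "\<And>y1 y2. q (y1, y2) = A1 * y1^2 + B * y1 * y2 + A2 * y2^2"
    using q_formula[OF assms(2)] unfolding A1_def A2_def B_def by blast
  define a where "a = A1 * x1^2"
  define m where "m = B * x1 * x2"
  define c where "c = A2 * x2^2"
  have qx: "q (x1, x2) = a + m + c" using qf unfolding a_def m_def c_def by simp
  have qa: "q (x1, 0) = a" using qf unfolding a_def by (simp add: power2_eq_square)
  have qc: "q (0, x2) = c" using qf unfolding c_def by (simp add: power2_eq_square)
  have v1: "vless (x1, 0) (x1, x2)"
    unfolding vless_def vle_def vadd_def using assms(4) by (metis add_0 add_0_right fst_conv snd_conv prod.inject)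
  have v2: "vless (0, x2) (x1, x2)"
    unfolding vless_def vle_def vadd_def using assms(3) by (metis add_0 add_0_right fst_conv snd_conv prod.inject)
  show ?thesis unfolding A1_def[symmetric] A2_def[symmetric] B_def[symmetric]
    a_def[symmetric] c_def[symmetric] m_def[symmetric]
  proof
    assume H: "q_minimal q (x1, x2) \<and> q (x1, x2) \<in> Tset"
    then have T: "a + m + c \<in> Tset" using qx by simp
    have "(a + m + c = m \<and> nu_less a m \<and> nu_less c m) \<or> a + m + c = a \<or> a + m + c = c"
    proof (cases "a + m + c = a + m \<and> nu_less c (a + m)")
      case True
      then have "a + m \<in> Tset" using T by simp
      from sum_T[OF ST this] show ?thesis using True by auto
    next
      case False
      then show ?thesis using sum_T[OF ST T] by auto
    qed
    moreover have "a + m + c \<noteq> a"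
      using H qx qa v1 unfolding q_minimal_def by metis
    moreover have "a + m + c \<noteq> c"
      using H qx qc v2 unfolding q_minimal_def by metis
    ultimately have M: "a + m + c = m" "nu_less a m" "nu_less c m" by auto
    have mT: "B * x1 * x2 \<in> Tset" using T M m_def by simp
    have "B \<in> Tset" using mT ghost_mult[OF SS] by (metis mult.assoc)
    moreover have "x1 \<in> Tset" using mT ghost_mult[OF SS] by (metis mult.assoc mult.commute)
    moreover have "x2 \<in> Tset" using mT ghost_mult[OF SS] by (metis mult.commute)
    ultimately show "B \<in> Tset \<and> x1 \<in> Tset \<and> x2 \<in> Tset \<and> nu_less a m \<and> nu_less c m"
      using M by auto
  next
    assume H: "B \<in> Tset \<and> x1 \<in> Tset \<and> x2 \<in> Tset \<and> nu_less a m \<and> nu_less c m"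
    have qm: "q (x1, x2) = m"
      using qx nu_less_add[OF ST] H by (metis add.commute)
    have mT: "m \<in> Tset" unfolding m_def using H TT[OF SS] by blast
    have "q_minimal q (x1, x2)"
      unfolding q_minimal_def
    proof
      assume "\<exists>x'. vless x' (x1, x2) \<and> q x' = q (x1, x2)"
      then obtain y1 y2 z1 z2 where yz: "y1 + z1 = x1" "y2 + z2 = x2" "(y1, y2) \<noteq> (x1, x2)"
        and qy: "q (y1, y2) = m"
        unfolding vless_def vle_def vadd_def using qm by fastforce
      have l1: "le y1 x1" using le_add[OF ST] yz by metis
      have l2: "le y2 x2" using le_add[OF ST] yz by metis
      have s1: "nu_less y1 x1" if "y1 \<noteq> x1"
        using sum_T[OF ST, of y1 z1] yz H that by auto
      have s2: "nu_less y2 x2" if "y2 \<noteq> x2"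
        using sum_T[OF ST, of y2 z2] yz H that by auto
      have t1: "nu_less (A1 * y1^2) m"
        using le_less_trans[OF ST le_mult_l[OF ST sq_le[OF ST l1]]] H a_def by blast
      have t3: "nu_less (A2 * y2^2) m"
        using le_less_trans[OF ST le_mult_l[OF ST sq_le[OF ST l2]]] H c_def by blast
      have t2: "nu_less (B * y1 * y2) m"
      proof (cases "y1 \<noteq> x1")
        case True
        have "le (B * y1 * y2) (B * y1 * x2)" using le_mult_l[OF ST l2, of "B * y1"] .
        moreover have "nu_less (y1 * (B * x2)) (x1 * (B * x2))"
          using strict_mult[OF SS s1[OF True]] TT[OF SS] H by blast
        ultimately show ?thesis using le_less_trans[OF ST] unfolding m_def by (metis mult.assoc mult.commute)
      next
        case False
        then have ne: "y2 \<noteq> x2" using yz by auto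
        have "le (B * y1 * y2) (B * x1 * y2)" using le_mult[OF ST le_mult_l[OF ST l1]] .
        moreover have "nu_less (y2 * (B * x1)) (x2 * (B * x1))"
          using strict_mult[OF SS s2[OF ne]] TT[OF SS] H by blast
        ultimately show ?thesis using le_less_trans[OF ST] unfolding m_def by (metis mult.assoc mult.commute)
      qed
      have "nu_less (q (y1, y2)) m"
        unfolding qf using less_add_both[OF ST less_add_both[OF ST t1 t2] t3] .
      then show False using qy unfolding nu_less_def by simp
    qed
    then show "q_minimal q (x1, x2) \<and> q (x1, x2) \<in> Tset" using qm mT by simp
  qed
qed

end
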